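(* Let $d\ge1$, $k\ge2$ be integers, $\alpha\in[0,1)$ and $\beta=1-\alpha$. Let $T_k$ be the $k\times k$ symmetric tridiagonal matrix with diagonal $(\alpha,\ \alpha(d+1),\ \dots,\ \alpha(d+1),\ \alpha d)$ (first entry $\alpha$, entries $2,\dots,k-1$ equal to $\alpha(d+1)$, last entry $\alpha d$) and all off-diagonal entries on the sub- and superdiagonal equal to $\beta\sqrt d$; let $T_j$ be its $j\times j$ leading principal submatrix. Then: (1) as a multiset, the spectrum of $A_\alpha(B(d,k))$ is the union of the spectra of $T_1,\dots,T_k$, where each eigenvalue of $T_j$ is counted with multiplicity $d^{k-j-1}(d-1)$ for $1\le j\le k-1$ and each eigenvalue of $T_k$ with multiplicity $1$ (multiplicities of equal eigenvalues from different $T_j$ being added); (2) the largest eigenvalue of $T_k$ is the largest eigenvalue of $A_\alpha(B(d,k))$.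
   Context: For a graph $G$, $A(G)$ is the adjacency matrix, $D(G)$ the diagonal degree matrix, and $A_\alpha(G)=\alpha D(G)+(1-\alpha)A(G)$. In a rooted tree the level of a vertex is its distance to the root plus one. The Bethe tree $B(d,k)$ is the rooted tree with $k$ levels in which the root has degree $d$, every vertex at level $j$ with $2\le j\le k-1$ has degree $d+1$, and every vertex at level $k$ has degree $1$. *)

theory Defs
  imports "Jordan_Normal_Form.Spectral_Radius" "HOL-Library.Multiset"
begin

definition adj_matrix :: "'v list \<Rightarrow> ('v \<Rightarrow> 'v \<Rightarrow> bool) \<Rightarrow> real mat" where
  "adj_matrix vs E = mat (length vs) (length vs) (\<lambda>(i,j). if E (vs ! i) (vs ! j) then 1 else 0)"

definition vdegree :: "'v list \<Rightarrow> ('v \<Rightarrow> 'v \<Rightarrow> bool) \<Rightarrow> 'v \<Rightarrow> nat" where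
  "vdegree vs E v = card {w \<in> set vs. E v w}"

definition deg_matrix :: "'v list \<Rightarrow> ('v \<Rightarrow> 'v \<Rightarrow> bool) \<Rightarrow> real mat" where
  "deg_matrix vs E = mat (length vs) (length vs)
     (\<lambda>(i,j). if i = j then real (vdegree vs E (vs ! i)) else 0)"

definition A_alpha :: "real \<Rightarrow> 'v list \<Rightarrow> ('v \<Rightarrow> 'v \<Rightarrow> bool) \<Rightarrow> real mat" where
  "A_alpha \<alpha> vs E = \<alpha> \<cdot>\<^sub>m deg_matrix vs E + (1 - \<alpha>) \<cdot>\<^sub>m adj_matrix vs E"

text \<open>Vertices: words over {0..<d} of length < k; the root is the empty word,
  level = length + 1; a vertex is adjacent to its one-letter extensions.\<close>

definition bethe_vertices :: "nat \<Rightarrow> nat \<Rightarrow> nat list list" where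
  "bethe_vertices d k = concat (map (\<lambda>l. List.n_lists l [0..<d]) [0..<k])"

definition bethe_adj :: "nat list \<Rightarrow> nat list \<Rightarrow> bool" where
  "bethe_adj u v \<longleftrightarrow> (\<exists>c. v = u @ [c]) \<or> (\<exists>c. u = v @ [c])"

definition spec_mset :: "real mat \<Rightarrow> complex multiset" where
  "spec_mset A = Abs_multiset (\<lambda>x. order x (char_poly (map_mat complex_of_real A)))"

definition largest_eigenvalue :: "real mat \<Rightarrow> real" where
  "largest_eigenvalue A = Max {x. eigenvalue A x}"

definition T_mat :: "nat \<Rightarrow> nat \<Rightarrow> real \<Rightarrow> real mat" where
  "T_mat d k \<alpha> = mat k k (\<lambda>(i,j).
     if i = j then (if i = 0 then \<alpha> else if i = k - 1 then \<alpha> * real d else \<alpha> * (real d + 1))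
     else if i = j + 1 \<or> j = i + 1 then (1 - \<alpha>) * sqrt (real d)
     else 0)"

definition leading_submat :: "nat \<Rightarrow> 'a mat \<Rightarrow> 'a mat" where
  "leading_submat j A = mat j j (\<lambda>(i,l). A $$ (i,l))"

end

theory Submission
  imports Defs
begin


lemma schur_scalar:
  fixes X :: "real mat"
  assumes X: "X \<in> carrier_mat n n" and B: "B \<in> carrier_mat n m" and C: "C \<in> carrier_mat m n"
    and c: "c \<noteq> 0"
  shows "det (four_block_mat X B C (c \<cdot>\<^sub>m 1\<^sub>m m)) = c ^ m * det (X - (1/c) \<cdot>\<^sub>m (B * C))"
proof -
  let ?L = "four_block_mat (1\<^sub>m n) ((1/c) \<cdot>\<^sub>m B) (0\<^sub>m m n) (1\<^sub>m m)"
  let ?R = "four_block_mat (X - (1/c) \<cdot>\<^sub>m (B * C)) (0\<^sub>m n m) C (c \<cdot>\<^sub>m 1\<^sub>m m)"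
  have BC: "B * C \<in> carrier_mat n n" using B C by auto
  have XBC: "X - (1/c) \<cdot>\<^sub>m (B * C) \<in> carrier_mat n n" using X BC by (intro minus_carrier_mat smult_carrier_mat)
  have "?L * ?R = four_block_mat (1\<^sub>m n * (X - (1/c) \<cdot>\<^sub>m (B * C)) + (1/c) \<cdot>\<^sub>m B * C)
     (1\<^sub>m n * 0\<^sub>m n m + (1/c) \<cdot>\<^sub>m B * (c \<cdot>\<^sub>m 1\<^sub>m m))
     (0\<^sub>m m n * (X - (1/c) \<cdot>\<^sub>m (B * C)) + 1\<^sub>m m * C) (0\<^sub>m m n * 0\<^sub>m n m + 1\<^sub>m m * (c \<cdot>\<^sub>m 1\<^sub>m m))"
    by (rule mult_four_block_mat[OF one_carrier_mat smult_carrier_mat[OF B] zero_carrier_mat one_carrier_mat XBC zero_carrier_mat C smult_carrier_mat[OF one_carrier_mat]])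
  also have "\<dots> = four_block_mat X B C (c \<cdot>\<^sub>m 1\<^sub>m m)"
  proof -
    have e1: "1\<^sub>m n * (X - (1/c) \<cdot>\<^sub>m (B * C)) = X - (1/c) \<cdot>\<^sub>m (B * C)"
      by (rule left_mult_one_mat[OF XBC])
    have e2: "(1/c) \<cdot>\<^sub>m B * C = (1/c) \<cdot>\<^sub>m (B * C)" by (rule mult_smult_assoc_mat[OF B C])
    have 1: "1\<^sub>m n * (X - (1/c) \<cdot>\<^sub>m (B * C)) + (1/c) \<cdot>\<^sub>m B * C = X"
      unfolding e1 e2 by (rule eq_matI, insert X B C, auto)
    have e3: "(1/c) \<cdot>\<^sub>m B * (c \<cdot>\<^sub>m 1\<^sub>m m) = c \<cdot>\<^sub>m ((1/c) \<cdot>\<^sub>m B * 1\<^sub>m m)"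
      by (rule mult_smult_distrib, insert B, auto)
    have e4: "(1/c) \<cdot>\<^sub>m B * 1\<^sub>m m = (1/c) \<cdot>\<^sub>m B" by (rule right_mult_one_mat, insert B, auto)
    have 2: "1\<^sub>m n * 0\<^sub>m n m + (1/c) \<cdot>\<^sub>m B * (c \<cdot>\<^sub>m 1\<^sub>m m) = B"
      unfolding e3 e4 by (rule eq_matI, insert B c, simp_all)
    have e5: "0\<^sub>m m n * (X - (1/c) \<cdot>\<^sub>m (B * C)) = 0\<^sub>m m n" by (rule left_mult_zero_mat[OF XBC])
    have e6: "1\<^sub>m m * C = C" by (rule left_mult_one_mat[OF C])
    have 3: "0\<^sub>m m n * (X - (1/c) \<cdot>\<^sub>m (B * C)) + 1\<^sub>m m * C = C"
      unfolding e5 e6 by (rule left_add_zero_mat[OF C])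
    have 4: "0\<^sub>m m n * 0\<^sub>m n m + 1\<^sub>m m * (c \<cdot>\<^sub>m 1\<^sub>m m) = c \<cdot>\<^sub>m 1\<^sub>m m"
      by (rule eq_matI, simp_all)
    show ?thesis unfolding 1 2 3 4 ..
  qed
  finally have eq: "four_block_mat X B C (c \<cdot>\<^sub>m 1\<^sub>m m) = ?L * ?R" by simp
  have dL: "det ?L = 1"
    by (subst det_four_block_mat_lower_left_zero[of _ n _ m], insert B, auto)
  have dR: "det ?R = det (X - (1/c) \<cdot>\<^sub>m (B * C)) * c ^ m"
    by (subst det_four_block_mat_upper_right_zero[of _ n _ m], insert XBC C, auto)
  have "det (?L * ?R) = det ?L * det ?R"
    by (rule det_mult[of _ "n+m"], insert X B C XBC, auto)
  then show ?thesis unfolding eq dL dR by simp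
qed

lemma bv_Suc: "bethe_vertices d (Suc m) = bethe_vertices d m @ List.n_lists m [0..<d]"
  by (simp add: bethe_vertices_def)

lemma bv_1: "bethe_vertices d (Suc 0) = [[]]"
  by (simp add: bethe_vertices_def)

lemma set_bv: "set (bethe_vertices d m) = {u. length u < m \<and> set u \<subseteq> {0..<d}}"
  by (auto simp: bethe_vertices_def set_n_lists)

lemma distinct_bv: "distinct (bethe_vertices d m)"
proof (induct m)
  case 0 show ?case by (simp add: bethe_vertices_def)
next
  case (Suc m) then show ?case by (auto simp: bv_Suc set_bv distinct_n_lists set_n_lists)
qed

lemma length_bv_Suc: "length (bethe_vertices d (Suc m)) = length (bethe_vertices d m) + d ^ m"
  by (simp add: bv_Suc length_n_lists)

lemma adj_same_len: "length u = length v \<Longrightarrow> \<not> bethe_adj u v"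
  by (auto simp: bethe_adj_def)

lemma adj_up: "length v = Suc (length u) \<Longrightarrow> bethe_adj u v \<longleftrightarrow> (\<exists>c. v = u @ [c])"
  by (auto simp: bethe_adj_def)

lemma adj_sym: "bethe_adj u v \<longleftrightarrow> bethe_adj v u"
  by (auto simp: bethe_adj_def)

lemma sum_nth_distinct:
  assumes "distinct xs"
  shows "(\<Sum>l\<in>{0..<length xs}. g (xs ! l)) = sum g (set xs)"
proof -
  have "bij_betw ((!) xs) {..<length xs} (set xs)" by (rule bij_betw_nth[OF assms], auto)
  then show ?thesis using sum.reindex_bij_betw[of "(!) xs" "{..<length xs}" "set xs" g]
    by (simp add: atLeast0LessThan)
qed

definition H :: "nat \<Rightarrow> nat \<Rightarrow> real \<Rightarrow> real \<Rightarrow> real \<Rightarrow> real \<Rightarrow> real mat" where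
 "H d m a e c w = (let vs = bethe_vertices d m in mat (length vs) (length vs) (\<lambda>(i,j).
    if i = j then (if Suc (length (vs!i)) = m then c else if vs!i = [] then a else e)
    else if bethe_adj (vs!i) (vs!j) then w else 0))"

lemma H_carrier: "H d m a e c w \<in> carrier_mat (length (bethe_vertices d m)) (length (bethe_vertices d m))"
  by (simp add: H_def Let_def)

lemma H_1: "det (H d (Suc 0) a e c w) = c"
  by (subst det_single, auto simp: H_def bv_1 Let_def)

definition Bm :: "nat \<Rightarrow> nat \<Rightarrow> real \<Rightarrow> real mat" where
  "Bm d m w = mat (length (bethe_vertices d m)) (d ^ m) (\<lambda>(i,j).
      if bethe_adj (bethe_vertices d m ! i) (List.n_lists m [0..<d] ! j) then w else 0)"

definition Cm :: "nat \<Rightarrow> nat \<Rightarrow> real \<Rightarrow> real mat" where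
  "Cm d m w = mat (d ^ m) (length (bethe_vertices d m)) (\<lambda>(i,j).
      if bethe_adj (List.n_lists m [0..<d] ! i) (bethe_vertices d m ! j) then w else 0)"

lemma bv_len: "i < length (bethe_vertices d m) \<Longrightarrow> length (bethe_vertices d m ! i) < m"
  using nth_mem[of i "bethe_vertices d m"] by (auto simp: set_bv)

lemma bv_set: "i < length (bethe_vertices d m) \<Longrightarrow> set (bethe_vertices d m ! i) \<subseteq> {0..<d}"
  using nth_mem[of i "bethe_vertices d m"] by (auto simp: set_bv)

lemma leaf_len: "i < d ^ m \<Longrightarrow> length (List.n_lists m [0..<d] ! i) = m"
  using nth_mem[of i "List.n_lists m [0..<d]"] by (auto simp: set_n_lists length_n_lists)

lemma H_Suc:
  assumes m: "m \<ge> 1"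
  shows "H d (Suc m) a e c w = four_block_mat (H d m a e (if m = 1 then a else e) w) (Bm d m w) (Cm d m w)
     (c \<cdot>\<^sub>m 1\<^sub>m (d ^ m))"
proof (rule eq_matI)
  let ?N = "length (bethe_vertices d m)"
  let ?vs = "bethe_vertices d m"
  let ?L = "List.n_lists m [0..<d]"
  have dims: "dim_row (H d m a e (if m = 1 then a else e) w) = ?N" "dim_col (H d m a e (if m = 1 then a else e) w) = ?N"
    by (simp_all add: H_def Let_def)
  show "dim_row (H d (Suc m) a e c w) = dim_row (four_block_mat (H d m a e (if m = 1 then a else e) w) (Bm d m w) (Cm d m w)
     (c \<cdot>\<^sub>m 1\<^sub>m (d ^ m)))" by (simp add: H_def Let_def length_bv_Suc)
  show "dim_col (H d (Suc m) a e c w) = dim_col (four_block_mat (H d m a e (if m = 1 then a else e) w) (Bm d m w) (Cm d m w)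
     (c \<cdot>\<^sub>m 1\<^sub>m (d ^ m)))" by (simp add: H_def Let_def length_bv_Suc)
  fix i j assume i: "i < dim_row (four_block_mat (H d m a e (if m = 1 then a else e) w) (Bm d m w) (Cm d m w)
     (c \<cdot>\<^sub>m 1\<^sub>m (d ^ m)))" and j: "j < dim_col (four_block_mat (H d m a e (if m = 1 then a else e) w) (Bm d m w) (Cm d m w)
     (c \<cdot>\<^sub>m 1\<^sub>m (d ^ m)))"
  have i': "i < ?N + d ^ m" and j': "j < ?N + d ^ m" using i j by (simp_all add: H_def Let_def)
  have nth1: "bethe_vertices d (Suc m) ! x = (if x < ?N then ?vs ! x else ?L ! (x - ?N))" for x
    by (simp add: bv_Suc nth_append)
  show "H d (Suc m) a e c w $$ (i, j) = four_block_mat (H d m a e (if m = 1 then a else e) w) (Bm d m w) (Cm d m w)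
     (c \<cdot>\<^sub>m 1\<^sub>m (d ^ m)) $$ (i, j)"
  proof (cases "i < ?N")
    case True note iN = this
    show ?thesis
    proof (cases "j < ?N")
      case True
      have li: "length (?vs ! i) < m" using bv_len[OF iN] .
      have "(?vs ! i = []) = (length (?vs ! i) = 0)" by simp
      then show ?thesis using iN True i' j' li m
        by (auto simp: H_def Let_def length_bv_Suc nth1 dims)
    next
      case False
      then show ?thesis using iN i' j'
        by (auto simp: H_def Bm_def Let_def length_bv_Suc nth1 dims)
    qed
  next
    case False note iN = this
    have li: "length (?L ! (i - ?N)) = m" using leaf_len i' iN by auto
    show ?thesis
    proof (cases "j < ?N")
      case True
      then show ?thesis using iN i' j'
        by (auto simp: H_def Cm_def Let_def length_bv_Suc nth1 dims)
    next
      case False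
      have lj: "length (?L ! (j - ?N)) = m" using leaf_len j' False by auto
      show ?thesis using iN False i' j' li lj adj_same_len[of "?L ! (i - ?N)" "?L ! (j - ?N)"]
        by (auto simp: H_def Let_def length_bv_Suc nth1 dims)
    qed
  qed
qed

lemma BC_entry:
  assumes i: "i < length (bethe_vertices d m)" and j: "j < length (bethe_vertices d m)"
  shows "(Bm d m w * Cm d m w) $$ (i, j) =
     (if i = j \<and> Suc (length (bethe_vertices d m ! i)) = m then real d * w^2 else 0)"
proof -
  let ?vs = "bethe_vertices d m"
  let ?L = "List.n_lists m [0..<d]"
  let ?u = "?vs ! i" and ?v = "?vs ! j"
  let ?P = "\<lambda>y. bethe_adj ?u y \<and> bethe_adj y ?v"
  have "(Bm d m w * Cm d m w) $$ (i, j) =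
     (\<Sum>l\<in>{0..<d^m}. (if bethe_adj ?u (?L ! l) then w else 0) * (if bethe_adj (?L ! l) ?v then w else 0))"
    using i j by (simp add: Bm_def Cm_def scalar_prod_def)
  also have "\<dots> = (\<Sum>l\<in>{0..<length ?L}. (\<lambda>y. if ?P y then w^2 else 0) (?L ! l))"
    by (rule sum.cong, auto simp: length_n_lists power2_eq_square)
  also have "\<dots> = (\<Sum>y\<in>set ?L. if ?P y then w^2 else 0)"
    by (rule sum_nth_distinct, rule distinct_n_lists, simp)
  also have "\<dots> = (\<Sum>y\<in>{y\<in>set ?L. ?P y}. w^2)"
    by (rule sum.inter_filter[symmetric], simp)
  also have "\<dots> = w^2 * real (card {y\<in>set ?L. ?P y})" by simp
  also have "{y\<in>set ?L. ?P y} = (if i = j \<and> Suc (length ?u) = m then (\<lambda>c. ?u @ [c]) ` {0..<d} else {})"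
  proof -
    have lu: "length ?u < m" "set ?u \<subseteq> {0..<d}" using bv_len[OF i] bv_set[OF i] by auto
    have lv: "length ?v < m" using bv_len[OF j] by auto
    have dist: "distinct ?vs" by (rule distinct_bv)
    show ?thesis
    proof (cases "i = j \<and> Suc (length ?u) = m")
      case True
      have eq: "{y\<in>set ?L. ?P y} = (\<lambda>c. ?u @ [c]) ` {0..<d}"
      proof (intro equalityI subsetI)
        fix y assume "y \<in> {y\<in>set ?L. ?P y}"
        then have ly: "length y = m" "set y \<subseteq> {0..<d}" "bethe_adj ?u y" by (auto simp: set_n_lists)
        have tu: "Suc (length ?u) = m" using True by blast
        have lyu: "length y = Suc (length ?u)" using ly(1) tu by simp
        obtain c where c: "y = ?u @ [c]" using adj_up[OF lyu] ly(3) by blast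
        then have "c < d" using ly(2) by auto
        then show "y \<in> (\<lambda>c. ?u @ [c]) ` {0..<d}" using c by auto
      next
        fix y assume "y \<in> (\<lambda>c. ?u @ [c]) ` {0..<d}"
        then obtain c where "c < d" "y = ?u @ [c]" by auto
        then show "y \<in> {y\<in>set ?L. ?P y}" using True lu by (auto simp: set_n_lists bethe_adj_def)
      qed
      show ?thesis unfolding if_P[OF True] by (rule eq)
    next
      case False
      { fix y assume y: "y \<in> set ?L" "?P y"
        have ly: "length y = m" using y by (simp add: set_n_lists)
        from y(2) obtain c1 where c1: "y = ?u @ [c1]" using ly lu adj_up[of ?u y]
          by (auto simp: bethe_adj_def)
        from y(2) obtain c2 where c2: "y = ?v @ [c2]" using ly lv
          by (auto simp: bethe_adj_def)
        have "?u = ?v" using c1 c2 by simp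
        then have "i = j" using nth_eq_iff_index_eq[OF dist i j] by simp
        moreover have "Suc (length ?u) = m" using c1 ly by simp
        ultimately have False using False by simp }
      then show ?thesis using False by auto
    qed
  qed
  finally show ?thesis
    by (auto simp: card_image inj_on_def)
qed

lemma det_H_Suc:
  assumes m: "m \<ge> 1" and c: "c \<noteq> 0"
  shows "det (H d (Suc m) a e c w) = c ^ (d ^ m) * det (H d m a e ((if m = 1 then a else e) - real d * w^2 / c) w)"
proof -
  let ?N = "length (bethe_vertices d m)"
  let ?X = "H d m a e (if m = 1 then a else e) w"
  have B: "Bm d m w \<in> carrier_mat ?N (d^m)" by (simp add: Bm_def)
  have C: "Cm d m w \<in> carrier_mat (d^m) ?N" by (simp add: Cm_def)
  have "det (H d (Suc m) a e c w) = c ^ (d ^ m) * det (?X - (1/c) \<cdot>\<^sub>m (Bm d m w * Cm d m w))"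
    unfolding H_Suc[OF m] by (rule schur_scalar[OF H_carrier B C c])
  also have "?X - (1/c) \<cdot>\<^sub>m (Bm d m w * Cm d m w) = H d m a e ((if m = 1 then a else e) - real d * w^2 / c) w"
  proof (rule eq_matI)
    fix i j assume i: "i < dim_row (H d m a e ((if m = 1 then a else e) - real d * w^2 / c) w)"
      and j: "j < dim_col (H d m a e ((if m = 1 then a else e) - real d * w^2 / c) w)"
    have i': "i < ?N" and j': "j < ?N" using i j by (simp_all add: H_def Let_def)
    show "(?X - (1/c) \<cdot>\<^sub>m (Bm d m w * Cm d m w)) $$ (i, j) = H d m a e ((if m = 1 then a else e) - real d * w^2 / c) w $$ (i, j)"
      using i' j' B C by (simp add: BC_entry[OF i' j'] H_def Let_def del: index_mult_mat(1))
  qed (insert B C, auto simp: H_def Let_def)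
  finally show ?thesis .
qed




lemma poly_char_poly:
  assumes A: "A \<in> carrier_mat n n"
  shows "poly (char_poly A) x = det (mat n n (\<lambda>(i,j). (if i = j then x else 0) - A $$ (i,j)))"
  unfolding char_poly_def
  by (rule poly_det_cong[of _ n], insert A, auto simp: char_poly_matrix_def)

lemma vdegree_bethe:
  assumes u: "length u < k" "set u \<subseteq> {0..<d}"
  shows "vdegree (bethe_vertices d k) bethe_adj u = (if Suc (length u) < k then d else 0) + (if u = [] then 0 else 1)"
proof -
  let ?C = "if Suc (length u) < k then (\<lambda>c. u @ [c]) ` {0..<d} else {}"
  let ?P = "if u = [] then {} else {butlast u}"
  have eq: "{w \<in> set (bethe_vertices d k). bethe_adj u w} = ?C \<union> ?P"
  proof (intro equalityI subsetI)
    fix w assume w: "w \<in> {w \<in> set (bethe_vertices d k). bethe_adj u w}"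
    then have w1: "length w < k" "set w \<subseteq> {0..<d}" "bethe_adj u w" by (auto simp: set_bv)
    from w1(3) consider (ch) c where "w = u @ [c]" | (pa) c where "u = w @ [c]"
      by (auto simp: bethe_adj_def)
    then show "w \<in> ?C \<union> ?P"
    proof cases
      case ch then show ?thesis using w1 by auto
    next
      case pa then show ?thesis by auto
    qed
  next
    fix w assume "w \<in> ?C \<union> ?P"
    then show "w \<in> {w \<in> set (bethe_vertices d k). bethe_adj u w}"
    proof
      assume "w \<in> ?C"
      then show ?thesis using u by (auto simp: set_bv bethe_adj_def split: if_splits)
    next
      assume w: "w \<in> ?P"
      then have "u \<noteq> []" "w = butlast u" by (auto split: if_splits)
      then have hu: "u = w @ [last u]" by simp
      have "length w < k" using u(1) arg_cong[OF hu, of length] by simp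
      moreover have "set w \<subseteq> {0..<d}" using u(2) arg_cong[OF hu, of set] by auto
      ultimately show ?thesis using hu by (auto simp: set_bv bethe_adj_def)
    qed
  qed
  have disj: "?C \<inter> ?P = {}" by (cases u rule: rev_cases) auto
  have cC: "card ?C = (if Suc (length u) < k then d else 0)"
    by (auto simp: card_image inj_on_def)
  have cP: "card ?P = (if u = [] then 0 else 1)" by auto
  show ?thesis unfolding vdegree_def eq
    by (subst card_Un_disjoint[OF _ _ disj], simp_all only: cC cP, auto)
qed

lemma A_alpha_H:
  assumes k: "k \<ge> 2"
  shows "mat (length (bethe_vertices d k)) (length (bethe_vertices d k))
     (\<lambda>(i,j). (if i = j then x else 0) - A_alpha \<alpha> (bethe_vertices d k) bethe_adj $$ (i,j))
   = H d k (x - \<alpha> * real d) (x - \<alpha> * (real d + 1)) (x - \<alpha>) (-(1 - \<alpha>))"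
proof (rule eq_matI)
  let ?vs = "bethe_vertices d k"
  fix i j assume i: "i < dim_row (H d k (x - \<alpha> * real d) (x - \<alpha> * (real d + 1)) (x - \<alpha>) (-(1 - \<alpha>)))"
    and j: "j < dim_col (H d k (x - \<alpha> * real d) (x - \<alpha> * (real d + 1)) (x - \<alpha>) (-(1 - \<alpha>)))"
  have i': "i < length ?vs" and j': "j < length ?vs" using i j by (simp_all add: H_def Let_def)
  have deg: "vdegree ?vs bethe_adj (?vs ! i) = (if Suc (length (?vs ! i)) < k then d else 0) + (if ?vs ! i = [] then 0 else 1)"
    by (rule vdegree_bethe[OF bv_len[OF i'] bv_set[OF i']])
  have li: "length (?vs ! i) < k" by (rule bv_len[OF i'])
  show "mat (length ?vs) (length ?vs)
     (\<lambda>(i,j). (if i = j then x else 0) - A_alpha \<alpha> ?vs bethe_adj $$ (i,j)) $$ (i, j) =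
    H d k (x - \<alpha> * real d) (x - \<alpha> * (real d + 1)) (x - \<alpha>) (-(1 - \<alpha>)) $$ (i, j)"
  proof (cases "i = j")
    case True
    have nadj: "\<not> bethe_adj (?vs ! i) (?vs ! i)" by (rule adj_same_len, simp)
    show ?thesis
    proof (cases "Suc (length (?vs ! i)) = k")
      case True2: True
      then have "?vs ! i \<noteq> []" using k by auto
      then show ?thesis using True True2 i' j' deg nadj
        by (simp add: A_alpha_def deg_matrix_def adj_matrix_def H_def Let_def)
    next
      case False2: False
      then have sl: "Suc (length (?vs ! i)) < k" using li by simp
      show ?thesis
      proof (cases "?vs ! i = []")
        case True3: True
        then show ?thesis using True False2 sl i' j' deg nadj
          by (simp add: A_alpha_def deg_matrix_def adj_matrix_def H_def Let_def)
      next
        case False3: False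
        then show ?thesis using True False2 sl i' j' deg nadj
          by (simp add: A_alpha_def deg_matrix_def adj_matrix_def H_def Let_def algebra_simps)
      qed
    qed
  next
    case False
    then show ?thesis using i' j'
      by (simp add: A_alpha_def deg_matrix_def adj_matrix_def H_def Let_def)
  qed
qed (simp_all add: H_def Let_def)

definition tf :: "nat \<Rightarrow> nat \<Rightarrow> real \<Rightarrow> nat \<Rightarrow> nat \<Rightarrow> real" where
  "tf d k \<alpha> i l = (if i = l then (if i = 0 then \<alpha> else if i = k - 1 then \<alpha> * real d else \<alpha> * (real d + 1))
     else if i = l + 1 \<or> l = i + 1 then (1 - \<alpha>) * sqrt (real d) else 0)"

definition MM :: "nat \<Rightarrow> nat \<Rightarrow> real \<Rightarrow> real \<Rightarrow> nat \<Rightarrow> real mat" where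
  "MM d k \<alpha> x j = mat j j (\<lambda>(i,l). (if i = l then x else 0) - tf d k \<alpha> i l)"

lemma q_eq:
  assumes "j \<le> k"
  shows "poly (char_poly (leading_submat j (T_mat d k \<alpha>))) x = det (MM d k \<alpha> x j)"
proof -
  have "poly (char_poly (leading_submat j (T_mat d k \<alpha>))) x =
    det (mat j j (\<lambda>(i,l). (if i = l then x else 0) - leading_submat j (T_mat d k \<alpha>) $$ (i,l)))"
    by (rule poly_char_poly, simp add: leading_submat_def)
  also have "mat j j (\<lambda>(i,l). (if i = l then x else 0) - leading_submat j (T_mat d k \<alpha>) $$ (i,l)) = MM d k \<alpha> x j"
    using assms by (intro eq_matI, auto simp: MM_def leading_submat_def T_mat_def tf_def)
  finally show ?thesis .
qed

lemma aux_b: fixes b D E :: real shows "0 + - b * (b * D) + E = E - b^2 * D"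
  by (simp add: power2_eq_square algebra_simps)

lemma MM_rec:
  assumes "Suc (Suc n) \<le> k"
  shows "det (MM d k \<alpha> x (Suc (Suc n))) = (x - tf d k \<alpha> (Suc n) (Suc n)) * det (MM d k \<alpha> x (Suc n))
     - ((1 - \<alpha>) * sqrt (real d))^2 * det (MM d k \<alpha> x n)"
proof -
  let ?M = "MM d k \<alpha> x (Suc (Suc n))"
  let ?b = "(1 - \<alpha>) * sqrt (real d)"
  have M: "?M \<in> carrier_mat (Suc (Suc n)) (Suc (Suc n))" by (simp add: MM_def)
  have "det ?M = (\<Sum>l<Suc (Suc n). ?M $$ (Suc n, l) * cofactor ?M (Suc n) l)"
    by (rule laplace_expansion_row[OF M], simp)
  also have "\<dots> = (\<Sum>l<n. ?M $$ (Suc n, l) * cofactor ?M (Suc n) l)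
     + ?M $$ (Suc n, n) * cofactor ?M (Suc n) n + ?M $$ (Suc n, Suc n) * cofactor ?M (Suc n) (Suc n)"
    by simp
  also have "(\<Sum>l<n. ?M $$ (Suc n, l) * cofactor ?M (Suc n) l) = 0"
    by (rule sum.neutral, auto simp: MM_def tf_def)
  also have "?M $$ (Suc n, n) = - ?b" by (simp add: MM_def tf_def)
  also have "?M $$ (Suc n, Suc n) = x - tf d k \<alpha> (Suc n) (Suc n)" by (simp add: MM_def)
  also have "cofactor ?M (Suc n) (Suc n) = det (MM d k \<alpha> x (Suc n))"
  proof -
    have "mat_delete ?M (Suc n) (Suc n) = MM d k \<alpha> x (Suc n)"
      by (intro eq_matI, auto simp: mat_delete_def MM_def)
    then show ?thesis by (simp add: cofactor_def)
  qed
  also have "cofactor ?M (Suc n) n = ?b * det (MM d k \<alpha> x n)"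
  proof -
    let ?D = "mat_delete ?M (Suc n) n"
    have D: "?D \<in> carrier_mat (Suc n) (Suc n)" by (simp add: MM_def mat_delete_def)
    have "det ?D = (\<Sum>i<Suc n. ?D $$ (i, n) * cofactor ?D i n)"
      by (rule laplace_expansion_column[OF D], simp)
    also have "\<dots> = (\<Sum>i<n. ?D $$ (i, n) * cofactor ?D i n) + ?D $$ (n, n) * cofactor ?D n n"
      by simp
    also have "(\<Sum>i<n. ?D $$ (i, n) * cofactor ?D i n) = 0"
      by (rule sum.neutral, auto simp: MM_def tf_def mat_delete_def)
    also have "?D $$ (n, n) = - ?b" by (simp add: MM_def tf_def mat_delete_def)
    also have "cofactor ?D n n = det (MM d k \<alpha> x n)"
    proof -
      have "mat_delete ?D n n = MM d k \<alpha> x n"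
        by (intro eq_matI, auto simp: mat_delete_def MM_def)
      then show ?thesis by (simp add: cofactor_def)
    qed
    finally have "det ?D = - ?b * det (MM d k \<alpha> x n)" by simp
    moreover have "cofactor ?M (Suc n) n = - det ?D"
      by (simp add: cofactor_def)
    ultimately show ?thesis by simp
  qed
  finally have h: "det ?M = 0 + - ?b * (?b * det (MM d k \<alpha> x n)) + (x - tf d k \<alpha> (Suc n) (Suc n)) * det (MM d k \<alpha> x (Suc n))" .
  show ?thesis unfolding h by (rule aux_b)
qed




lemma q_0: "det (MM d k \<alpha> x 0) = 1"
  by (rule det_dim_zero, simp add: MM_def)

lemma q_1: "det (MM d k \<alpha> x 1) = x - \<alpha>"
  by (subst det_single, auto simp: MM_def tf_def)

lemma q_rec:
  assumes "2 \<le> j" "j \<le> k"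
  shows "det (MM d k \<alpha> x j) = (x - (if j = k then \<alpha> * real d else \<alpha> * (real d + 1))) * det (MM d k \<alpha> x (j - 1))
     - (1 - \<alpha>)^2 * real d * det (MM d k \<alpha> x (j - 2))"
proof -
  obtain n where j: "j = Suc (Suc n)" using assms(1) by (metis add_2_eq_Suc le_Suc_ex)
  have t: "tf d k \<alpha> (Suc n) (Suc n) = (if j = k then \<alpha> * real d else \<alpha> * (real d + 1))"
    using assms j by (auto simp: tf_def)
  have b: "((1 - \<alpha>) * sqrt (real d))^2 = (1 - \<alpha>)^2 * real d"
    by (simp add: power_mult_distrib)
  show ?thesis using MM_rec[of n k d \<alpha> x] assms unfolding j t b by simp
qed

lemma bethe_ind:
  fixes d k :: nat and \<alpha> x :: real
  assumes d: "d \<ge> 1" and k: "k \<ge> 2" and nz: "\<forall>l\<in>{1..k}. det (MM d k \<alpha> x l) \<noteq> 0"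
  shows "1 \<le> m \<Longrightarrow> m \<le> k \<Longrightarrow> i + m = k + 1 \<Longrightarrow>
    det (H d m (x - \<alpha> * real d) (x - \<alpha> * (real d + 1)) (det (MM d k \<alpha> x i) / det (MM d k \<alpha> x (i - 1))) (-(1 - \<alpha>)))
      * det (MM d k \<alpha> x (i - 1)) ^ (d ^ (m - 1))
    = det (MM d k \<alpha> x k) * (\<Prod>l\<in>{i..k-1}. det (MM d k \<alpha> x l) ^ (d ^ (k - l - 1) * (d - 1)))"
proof (induct m arbitrary: i)
  case 0 then show ?case by simp
next
  case (Suc m)
  let ?q = "\<lambda>j. det (MM d k \<alpha> x j)"
  let ?a = "x - \<alpha> * real d" and ?e = "x - \<alpha> * (real d + 1)" and ?w = "-(1 - \<alpha>)"
  show ?case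
  proof (cases "m = 0")
    case True
    then have i: "i = k" using Suc by simp
    have nz1: "?q (k - 1) \<noteq> 0" using nz k by auto
    have e: "{k..k-1} = {}" using k by auto
    show ?thesis using True i nz1 k by (simp add: H_1)
  next
    case False
    then have m1: "m \<ge> 1" by simp
    have i1: "i \<ge> 1" and ik: "i \<le> k - 1" using Suc.prems m1 by auto
    have qi: "?q i \<noteq> 0" using nz i1 ik by auto
    have qi1: "?q (i - 1) \<noteq> 0"
    proof (cases "i = 1")
      case True then show ?thesis by (simp add: q_0)
    next
      case False
      then have "i - 1 \<in> {1..k}" using i1 ik by auto
      then show ?thesis using nz by blast
    qed
    let ?c = "?q i / ?q (i - 1)"
    have c: "?c \<noteq> 0" using qi qi1 by simp
    have rec: "?q (i + 1) = (x - (if i + 1 = k then \<alpha> * real d else \<alpha> * (real d + 1))) * ?q i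
       - (1 - \<alpha>)^2 * real d * ?q (i - 1)"
      using q_rec[of "i + 1" k d \<alpha> x] i1 ik k by simp
    have ik2: "(i + 1 = k) = (m = 1)" using Suc.prems by auto
    have cnew: "(if m = 1 then ?a else ?e) - real d * ?w^2 / ?c = ?q (i + 1) / ?q i"
      using qi qi1 unfolding rec ik2 by (auto simp: field_simps power2_eq_square)
    have IH: "det (H d m ?a ?e (?q (i + 1) / ?q (i + 1 - 1)) ?w) * ?q (i + 1 - 1) ^ (d ^ (m - 1))
       = ?q k * (\<Prod>l\<in>{i+1..k-1}. ?q l ^ (d ^ (k - l - 1) * (d - 1)))"
      using Suc.hyps[of "i + 1"] m1 Suc.prems by simp
    have dm: "d ^ m = d ^ (m - 1) * (d - 1) + d ^ (m - 1)"
    proof -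
      have "d ^ m = d ^ (m - 1) * d" using m1 by (metis One_nat_def Suc_pred' less_eq_Suc_le mult.commute power_Suc)
      also have "\<dots> = d ^ (m - 1) * (d - 1) + d ^ (m - 1)"
        using d by (cases d) (simp_all add: algebra_simps)
      finally show ?thesis .
    qed
    have kil: "k - i - 1 = m - 1" using Suc.prems by simp
    have prod: "(\<Prod>l\<in>{i..k-1}. ?q l ^ (d ^ (k - l - 1) * (d - 1)))
       = ?q i ^ (d ^ (m - 1) * (d - 1)) * (\<Prod>l\<in>{i+1..k-1}. ?q l ^ (d ^ (k - l - 1) * (d - 1)))"
      using prod.atLeast_Suc_atMost[OF ik, of "\<lambda>l. ?q l ^ (d ^ (k - l - 1) * (d - 1))"] kil by simp
    have "det (H d (Suc m) ?a ?e ?c ?w) * ?q (i - 1) ^ (d ^ (Suc m - 1))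
       = ?c ^ (d ^ m) * det (H d m ?a ?e (?q (i + 1) / ?q i) ?w) * ?q (i - 1) ^ (d ^ m)"
      using det_H_Suc[OF m1 c, of d ?a ?e ?w] cnew by simp
    also have "\<dots> = ?q i ^ (d ^ m) * det (H d m ?a ?e (?q (i + 1) / ?q i) ?w)"
    proof -
      have h: "?c ^ (d ^ m) * ?q (i - 1) ^ (d ^ m) = ?q i ^ (d ^ m)"
        unfolding power_mult_distrib[symmetric] using qi1 by simp
      have "?c ^ (d ^ m) * det (H d m ?a ?e (?q (i + 1) / ?q i) ?w) * ?q (i - 1) ^ (d ^ m)
        = (?c ^ (d ^ m) * ?q (i - 1) ^ (d ^ m)) * det (H d m ?a ?e (?q (i + 1) / ?q i) ?w)"
        by (simp only: mult_ac)
      then show ?thesis unfolding h .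
    qed
    also have "?q i ^ (d ^ m) * det (H d m ?a ?e (?q (i + 1) / ?q i) ?w)
       = ?q i ^ (d ^ (m - 1) * (d - 1)) * (det (H d m ?a ?e (?q (i + 1) / ?q i) ?w) * ?q i ^ (d ^ (m - 1)))"
      unfolding dm power_add by simp
    also have "det (H d m ?a ?e (?q (i + 1) / ?q i) ?w) * ?q i ^ (d ^ (m - 1))
       = ?q k * (\<Prod>l\<in>{i+1..k-1}. ?q l ^ (d ^ (k - l - 1) * (d - 1)))"
      using IH by simp
    finally show ?thesis unfolding prod by simp
  qed
qed

lemma main_eval:
  fixes d k :: nat and \<alpha> x :: real
  assumes d: "d \<ge> 1" and k: "k \<ge> 2" and nz: "\<forall>l\<in>{1..k}. det (MM d k \<alpha> x l) \<noteq> 0"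
  shows "poly (char_poly (A_alpha \<alpha> (bethe_vertices d k) bethe_adj)) x
    = det (MM d k \<alpha> x k) * (\<Prod>l\<in>{1..k-1}. det (MM d k \<alpha> x l) ^ (d ^ (k - l - 1) * (d - 1)))"
proof -
  have A: "A_alpha \<alpha> (bethe_vertices d k) bethe_adj \<in> carrier_mat (length (bethe_vertices d k)) (length (bethe_vertices d k))"
    by (simp add: A_alpha_def deg_matrix_def adj_matrix_def)
  have "poly (char_poly (A_alpha \<alpha> (bethe_vertices d k) bethe_adj)) x
     = det (H d k (x - \<alpha> * real d) (x - \<alpha> * (real d + 1)) (x - \<alpha>) (-(1 - \<alpha>)))"
    unfolding poly_char_poly[OF A] A_alpha_H[OF k] ..
  also have "x - \<alpha> = det (MM d k \<alpha> x 1) / det (MM d k \<alpha> x (1 - 1))" using q_1[of d k \<alpha> x] by (simp add: q_0)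
  also have "det (H d k (x - \<alpha> * real d) (x - \<alpha> * (real d + 1)) (det (MM d k \<alpha> x 1) / det (MM d k \<alpha> x (1 - 1))) (-(1 - \<alpha>)))
     = det (H d k (x - \<alpha> * real d) (x - \<alpha> * (real d + 1)) (det (MM d k \<alpha> x 1) / det (MM d k \<alpha> x (1 - 1))) (-(1 - \<alpha>)))
       * det (MM d k \<alpha> x (1 - 1)) ^ (d ^ (k - 1))" by (simp add: q_0)
  also have "\<dots> = det (MM d k \<alpha> x k) * (\<Prod>l\<in>{1..k-1}. det (MM d k \<alpha> x l) ^ (d ^ (k - l - 1) * (d - 1)))"
    by (rule bethe_ind[OF d k nz], insert k, auto)
  finally show ?thesis .
qed




lemma cp_nz: "(A :: 'a :: field mat) \<in> carrier_mat n n \<Longrightarrow> char_poly A \<noteq> 0"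
  using degree_monic_char_poly[of A n] by auto

lemma lead_carrier: "leading_submat j A \<in> carrier_mat j j"
  by (simp add: leading_submat_def)

lemma T_lead_k: "leading_submat k (T_mat d k \<alpha>) = T_mat d k \<alpha>"
  by (rule eq_matI, auto simp: leading_submat_def T_mat_def)

lemma order_power_nz: "(p :: 'a :: idom poly) \<noteq> 0 \<Longrightarrow> order x (p ^ n) = n * order x p"
proof (induct n)
  case 0 then show ?case by (simp add: order_0I)
next
  case (Suc n)
  have "p * p ^ n \<noteq> 0" using Suc.prems by simp
  then show ?case using Suc by (simp add: order_mult)
qed

lemma order_prod_nz: "finite A \<Longrightarrow> (\<forall>a\<in>A. (f a :: 'a :: idom poly) \<noteq> 0) \<Longrightarrow> order x (prod f A) = (\<Sum>a\<in>A. order x (f a))"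
proof (induct A rule: finite_induct)
  case empty then show ?case by (simp add: order_0I)
next
  case (insert a A)
  have "f a * prod f A \<noteq> 0" using insert by auto
  then show ?case using insert by (simp add: order_mult)
qed

lemma count_spec:
  assumes A: "A \<in> carrier_mat n n"
  shows "count (spec_mset A) x = order x (char_poly (map_mat complex_of_real A))"
proof -
  let ?p = "char_poly (map_mat complex_of_real A)"
  have nz: "?p \<noteq> 0" by (rule cp_nz[of _ n], insert A, auto)
  have "{x. 0 < order x ?p} \<subseteq> {x. poly ?p x = 0}" using nz order_root by auto
  then have fin: "finite {x. 0 < order x ?p}" using poly_roots_finite[OF nz] finite_subset by blast
  show ?thesis unfolding spec_mset_def by (simp add: count_Abs_multiset[OF fin])
qed

context
  fixes d k :: nat and \<alpha> :: real
  assumes d: "d \<ge> 1" and k: "k \<ge> 2" and a0: "0 \<le> \<alpha>" and a1: "\<alpha> < 1"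
begin

abbreviation "cpT j \<equiv> char_poly (leading_submat j (T_mat d k \<alpha>))"
abbreviation "ee j \<equiv> d ^ (k - j - 1) * (d - 1)"
abbreviation "AA \<equiv> A_alpha \<alpha> (bethe_vertices d k) bethe_adj"

lemma cpT_nz: "cpT j \<noteq> 0"
  by (rule cp_nz[OF lead_carrier])

lemma AA_carrier: "AA \<in> carrier_mat (length (bethe_vertices d k)) (length (bethe_vertices d k))"
  by (simp add: A_alpha_def deg_matrix_def adj_matrix_def)

lemma poly_ident: "char_poly AA = cpT k * (\<Prod>j\<in>{1..k-1}. cpT j ^ ee j)"
proof (rule ccontr)
  let ?R = "cpT k * (\<Prod>j\<in>{1..k-1}. cpT j ^ ee j)"
  assume ne: "char_poly AA \<noteq> ?R"
  then have ne0: "char_poly AA - ?R \<noteq> 0" by simp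
  let ?Z = "\<Union>l\<in>{1..k}. {x. poly (cpT l) x = 0}"
  have finZ: "finite ?Z" using poly_roots_finite[OF cpT_nz] by auto
  have sub: "UNIV - ?Z \<subseteq> {x. poly (char_poly AA - ?R) x = 0}"
  proof
    fix x assume x: "x \<in> UNIV - ?Z"
    have nz: "\<forall>l\<in>{1..k}. det (MM d k \<alpha> x l) \<noteq> 0"
      using x q_eq[of _ k d \<alpha> x] by auto
    have "poly (char_poly AA) x = det (MM d k \<alpha> x k) * (\<Prod>l\<in>{1..k-1}. det (MM d k \<alpha> x l) ^ ee l)"
      by (rule main_eval[OF d k nz])
    also have "\<dots> = poly ?R x"
    proof -
      have e1: "(\<Prod>l\<in>{1..k-1}. det (MM d k \<alpha> x l) ^ ee l) = (\<Prod>j\<in>{1..k-1}. poly (cpT j) x ^ ee j)"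
        by (rule prod.cong, simp, subst q_eq, auto)
      show ?thesis unfolding e1 using q_eq[of k k d \<alpha> x] by (simp add: poly_prod)
    qed
    finally show "x \<in> {x. poly (char_poly AA - ?R) x = 0}" by simp
  qed
  have "infinite (UNIV - ?Z)" by (rule Diff_infinite_finite[OF finZ infinite_UNIV_char_0])
  moreover have "finite {x. poly (char_poly AA - ?R) x = 0}" by (rule poly_roots_finite[OF ne0])
  ultimately show False using sub finite_subset by blast
qed

lemma part1: "spec_mset AA =
           (\<Sum>j\<in>{1..k-1}. repeat_mset (ee j) (spec_mset (leading_submat j (T_mat d k \<alpha>))))
           + spec_mset (T_mat d k \<alpha>)"
proof (rule multiset_eqI)
  fix x
  interpret ofr: map_poly_comm_ring_hom "of_real :: real \<Rightarrow> complex" ..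
  let ?C = "\<lambda>j. char_poly (map_mat complex_of_real (leading_submat j (T_mat d k \<alpha>)))"
  have Cj: "?C j = map_poly complex_of_real (cpT j)" for j
    by (rule of_real_hom.char_poly_hom[OF lead_carrier])
  have Cnz: "?C j \<noteq> 0" for j by (rule cp_nz[of _ j], simp add: lead_carrier)
  have "char_poly (map_mat complex_of_real AA) = map_poly complex_of_real (char_poly AA)"
    by (rule of_real_hom.char_poly_hom[OF AA_carrier])
  also have "\<dots> = ?C k * (\<Prod>j\<in>{1..k-1}. ?C j ^ ee j)"
    unfolding poly_ident ofr.hom_mult ofr.hom_prod ofr.hom_power Cj ..
  finally have cA: "char_poly (map_mat complex_of_real AA) = ?C k * (\<Prod>j\<in>{1..k-1}. ?C j ^ ee j)" .
  have Tc: "T_mat d k \<alpha> \<in> carrier_mat k k" by (simp add: T_mat_def)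
  have pnz: "(\<Prod>j\<in>{1..k-1}. ?C j ^ ee j) \<noteq> 0" using Cnz by (simp add: prod_zero_iff)
  have "count (spec_mset AA) x = order x (?C k * (\<Prod>j\<in>{1..k-1}. ?C j ^ ee j))"
    by (simp add: count_spec[OF AA_carrier] cA)
  also have "\<dots> = order x (?C k) + (\<Sum>j\<in>{1..k-1}. ee j * order x (?C j))"
  proof -
    have "?C k * (\<Prod>j\<in>{1..k-1}. ?C j ^ ee j) \<noteq> 0" using Cnz pnz by simp
    then have o1: "order x (?C k * (\<Prod>j\<in>{1..k-1}. ?C j ^ ee j)) = order x (?C k) + order x (\<Prod>j\<in>{1..k-1}. ?C j ^ ee j)"
      by (rule order_mult)
    have o2: "order x (\<Prod>j\<in>{1..k-1}. ?C j ^ ee j) = (\<Sum>j\<in>{1..k-1}. order x (?C j ^ ee j))"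
      by (rule order_prod_nz, simp, use Cnz in simp)
    have o3: "order x (?C j ^ ee j) = ee j * order x (?C j)" for j by (rule order_power_nz[OF Cnz])
    show ?thesis unfolding o1 o2 o3 ..
  qed
  also have "\<dots> = count ((\<Sum>j\<in>{1..k-1}. repeat_mset (ee j) (spec_mset (leading_submat j (T_mat d k \<alpha>))))
           + spec_mset (T_mat d k \<alpha>)) x"
    using count_spec[OF Tc, of x] by (simp add: count_sum count_spec[OF lead_carrier] T_lead_k)
  finally show "count (spec_mset AA) x = count ((\<Sum>j\<in>{1..k-1}. repeat_mset (ee j) (spec_mset (leading_submat j (T_mat d k \<alpha>))))
           + spec_mset (T_mat d k \<alpha>)) x" .
qed

end



lemma root_above:
  fixes p :: "real poly"
  assumes lc: "lead_coeff p > 0" and y: "poly p y < 0"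
  shows "\<exists>r>y. poly p r = 0"
proof -
  obtain N where N: "\<forall>x\<ge>N. lead_coeff p \<le> poly p x" using poly_pinfty_gt_lc[OF lc] by auto
  let ?z = "max N (y + 1)"
  have "poly p ?z > 0" using N lc by (meson max.cobounded1 order_less_le_trans)
  moreover have "y < ?z" by simp
  ultimately obtain r where "y < r" "r < ?z" "poly p r = 0" using poly_IVT_pos[OF _ y] by blast
  then show ?thesis by blast
qed

lemma root_le_max:
  fixes p :: "real poly"
  assumes "p \<noteq> 0" "poly p r = 0"
  shows "r \<le> Max {r. poly p r = 0}"
  using assms by (intro Max_ge) (auto simp: poly_roots_finite)

lemma max_root:
  fixes p :: "real poly"
  assumes "p \<noteq> 0" "{r. poly p r = 0} \<noteq> {}"
  shows "poly p (Max {r. poly p r = 0}) = 0"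
proof -
  have "Max {r. poly p r = 0} \<in> {r. poly p r = 0}"
    using assms by (intro Max_in) (auto simp: poly_roots_finite)
  then show ?thesis by simp
qed

lemma pos_above:
  fixes p :: "real poly"
  assumes lc: "lead_coeff p > 0" and nz: "p \<noteq> 0" and ne: "{r. poly p r = 0} \<noteq> {}"
    and x: "x > Max {r. poly p r = 0}"
  shows "poly p x > 0"
proof (rule ccontr)
  assume "\<not> poly p x > 0"
  then consider "poly p x = 0" | "poly p x < 0" by linarith
  then show False
  proof cases
    case 1 then show False using root_le_max[OF nz 1] x by simp
  next
    case 2
    then obtain r where "r > x" "poly p r = 0" using root_above[OF lc] by blast
    then show False using root_le_max[OF nz, of r] x by simp
  qed
qed

lemma lc_cp: "(A :: real mat) \<in> carrier_mat n n \<Longrightarrow> lead_coeff (char_poly A) = 1"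
  using degree_monic_char_poly[of A n] by simp

context
  fixes d k :: nat and \<alpha> :: real
  assumes d: "d \<ge> 1" and k: "k \<ge> 2" and a0: "0 \<le> \<alpha>" and a1: "\<alpha> < 1"
begin

abbreviation "cpT' j \<equiv> char_poly (leading_submat j (T_mat d k \<alpha>))"
abbreviation "rho j \<equiv> Max {r. poly (cpT' j) r = 0}"

lemma cpT_nz': "cpT' j \<noteq> 0"
  by (rule cp_nz[OF lead_carrier])

lemma cpT_lc: "lead_coeff (cpT' j) > 0"
  using lc_cp[OF lead_carrier] by simp

lemma interlace:
  "n \<le> k \<Longrightarrow> \<forall>i\<in>{1..n}. {r. poly (cpT' i) r = 0} \<noteq> {} \<and> (\<forall>l\<in>{1..<i}. rho l < rho i)"
proof (induct n)
  case 0 then show ?case by simp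
next
  case (Suc n)
  have IH: "\<forall>i\<in>{1..n}. {r. poly (cpT' i) r = 0} \<noteq> {} \<and> (\<forall>l\<in>{1..<i}. rho l < rho i)"
    using Suc by simp
  have new: "{r. poly (cpT' (Suc n)) r = 0} \<noteq> {} \<and> (\<forall>l\<in>{1..<Suc n}. rho l < rho (Suc n))"
  proof (cases "n = 0")
    case True
    have "poly (cpT' 1) \<alpha> = 0" using q_eq[of 1 k d \<alpha> \<alpha>] q_1[of d k \<alpha> \<alpha>] k by simp
    then show ?thesis using True by auto
  next
    case False
    then have n1: "n \<ge> 1" by simp
    let ?y = "rho n"
    have nen: "{r. poly (cpT' n) r = 0} \<noteq> {}" using IH n1 by auto
    have yroot: "det (MM d k \<alpha> ?y n) = 0"
      using max_root[OF cpT_nz' nen] q_eq[of n k d \<alpha> ?y] Suc.prems by simp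
    have prev: "det (MM d k \<alpha> ?y (n - 1)) > 0"
    proof (cases "n = 1")
      case True then show ?thesis by (simp add: q_0)
    next
      case False
      then have nm: "n - 1 \<in> {1..<n}" "n - 1 \<in> {1..n}" using n1 by auto
      have ne1: "{r. poly (cpT' (n - 1)) r = 0} \<noteq> {}" using IH nm by blast
      have lt: "rho (n - 1) < ?y" using IH nm n1 by auto
      have "poly (cpT' (n - 1)) ?y > 0" by (rule pos_above[OF cpT_lc cpT_nz' ne1 lt])
      then show ?thesis using q_eq[of "n - 1" k d \<alpha> ?y] Suc.prems by simp
    qed
    have b: "(1 - \<alpha>)^2 * real d > 0" using a1 d by simp
    have "det (MM d k \<alpha> ?y (Suc n)) = (?y - (if Suc n = k then \<alpha> * real d else \<alpha> * (real d + 1))) * det (MM d k \<alpha> ?y n)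
       - (1 - \<alpha>)^2 * real d * det (MM d k \<alpha> ?y (n - 1))"
      using q_rec[of "Suc n" k d \<alpha> ?y] n1 Suc.prems by simp
    also have "\<dots> < 0" using yroot prev b by simp
    finally have "poly (cpT' (Suc n)) ?y < 0" using q_eq[of "Suc n" k d \<alpha> ?y] Suc.prems by simp
    then obtain r where r: "r > ?y" "poly (cpT' (Suc n)) r = 0" using root_above[OF cpT_lc] by blast
    have ne: "{r. poly (cpT' (Suc n)) r = 0} \<noteq> {}" using r by auto
    have gt: "?y < rho (Suc n)" using r root_le_max[OF cpT_nz', of "Suc n" r] by simp
    have "\<forall>l\<in>{1..<Suc n}. rho l < rho (Suc n)"
    proof
      fix l assume l: "l \<in> {1..<Suc n}"
      show "rho l < rho (Suc n)"
      proof (cases "l = n")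
        case True then show ?thesis using gt by simp
      next
        case False
        then have "l \<in> {1..<n}" using l by auto
        then have "rho l < rho n" using IH n1 by auto
        then show ?thesis using gt by simp
      qed
    qed
    then show ?thesis using ne by blast
  qed
  show ?case
  proof
    fix i assume "i \<in> {1..Suc n}"
    then consider "i \<in> {1..n}" | "i = Suc n" by fastforce
    then show "{r. poly (cpT' i) r = 0} \<noteq> {} \<and> (\<forall>l\<in>{1..<i}. rho l < rho i)"
      by cases (use IH new in auto)
  qed
qed

lemma part2: "largest_eigenvalue (T_mat d k \<alpha>) = largest_eigenvalue (A_alpha \<alpha> (bethe_vertices d k) bethe_adj)"
proof -
  have I: "\<forall>i\<in>{1..k}. {r. poly (cpT' i) r = 0} \<noteq> {} \<and> (\<forall>l\<in>{1..<i}. rho l < rho i)"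
    by (rule interlace, simp)
  have Tc: "T_mat d k \<alpha> \<in> carrier_mat k k" by (simp add: T_mat_def)
  have "largest_eigenvalue (T_mat d k \<alpha>) = Max {x. poly (cpT' k) x = 0}"
    unfolding largest_eigenvalue_def eigenvalue_root_char_poly[OF Tc] T_lead_k ..
  also have "\<dots> = largest_eigenvalue (A_alpha \<alpha> (bethe_vertices d k) bethe_adj)"
  proof -
    let ?A = "A_alpha \<alpha> (bethe_vertices d k) bethe_adj"
    have Ac: "?A \<in> carrier_mat (length (bethe_vertices d k)) (length (bethe_vertices d k))"
      by (simp add: A_alpha_def deg_matrix_def adj_matrix_def)
    have PI: "char_poly ?A = cpT' k * (\<Prod>j\<in>{1..k-1}. cpT' j ^ (d ^ (k - j - 1) * (d - 1)))"
      by (rule poly_ident[OF d k a0 a1])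
    have kin: "k \<in> {1..k}" using k by simp
    have Ik: "{r. poly (cpT' k) r = 0} \<noteq> {} \<and> (\<forall>l\<in>{1..<k}. rho l < rho k)" using bspec[OF I kin] .
    have nek: "{r. poly (cpT' k) r = 0} \<noteq> {}" using Ik by blast
    have "Max {x. poly (char_poly ?A) x = 0} = rho k"
    proof (rule Max_eqI)
      show "finite {x. poly (char_poly ?A) x = 0}" by (rule poly_roots_finite[OF cp_nz[OF Ac]])
      show "rho k \<in> {x. poly (char_poly ?A) x = 0}"
        using max_root[OF cpT_nz' nek] unfolding PI by simp
      fix y assume "y \<in> {x. poly (char_poly ?A) x = 0}"
      then have "poly (cpT' k) y * (\<Prod>j\<in>{1..k-1}. poly (cpT' j) y ^ (d ^ (k - j - 1) * (d - 1))) = 0"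
        unfolding PI by (simp add: poly_prod)
      then have "poly (cpT' k) y = 0 \<or> (\<exists>j\<in>{1..k-1}. poly (cpT' j) y ^ (d ^ (k - j - 1) * (d - 1)) = 0)"
        by (simp add: prod_zero_iff)
      then have "poly (cpT' k) y = 0 \<or> (\<exists>j\<in>{1..k-1}. poly (cpT' j) y = 0)"
        by (metis power_eq_0_iff)
      then show "y \<le> rho k"
      proof
        assume "poly (cpT' k) y = 0"
        then show ?thesis by (rule root_le_max[OF cpT_nz'])
      next
        assume "\<exists>j\<in>{1..k-1}. poly (cpT' j) y = 0"
        then obtain j where j: "j \<in> {1..k-1}" "poly (cpT' j) y = 0" by blast
        have "y \<le> rho j" by (rule root_le_max[OF cpT_nz' j(2)])
        moreover have "j \<in> {1..<k}" using j(1) k by auto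
        then have "rho j < rho k" using Ik by blast
        ultimately show ?thesis by simp
      qed
    qed
    then show ?thesis
      unfolding largest_eigenvalue_def eigenvalue_root_char_poly[OF Ac] by simp
  qed
  finally show ?thesis .
qed

end

theorem corollary7:
  fixes d k :: nat and \<alpha> :: real
  assumes "d \<ge> 1" and "k \<ge> 2" and "0 \<le> \<alpha>" and "\<alpha> < 1"
  shows "spec_mset (A_alpha \<alpha> (bethe_vertices d k) bethe_adj) =
           (\<Sum>j\<in>{1..k-1}. repeat_mset (d ^ (k - j - 1) * (d - 1))
                (spec_mset (leading_submat j (T_mat d k \<alpha>))))
           + spec_mset (T_mat d k \<alpha>)
       \<and> largest_eigenvalue (T_mat d k \<alpha>) =
           largest_eigenvalue (A_alpha \<alpha> (bethe_vertices d k) bethe_adj)"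
    using part1[OF assms] part2[OF assms] by simp

end
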